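(* Let $N\ge 2$, $r(k)=N-1-k$ on $\{0,\dots,N-1\}$, and call a map $\mu$ on partial $N\times N$ arrays admissible if it has the following form: there is a permutation $\pi$ of $\{0,\dots,N-1\}$ with $\pi\circ r=r\circ\pi$ and $\pi(0)\in\{0,N-1\}$ and a $\rho\in\{\pi, r\circ\pi\}$ such that, for a partial array $A$ whose first row is a full permutation of $\{0,\dots,N-1\}$, $T(A)[\pi(i)][\rho(j)]=A[i][j]$ (cell $(\pi(i),\rho(j))$ filled iff $(i,j)$ filled) and $\mu(A)=\tau\circ T(A)$, where $\tau$ is the unique symbol permutation making the first row of $\tau\circ T(A)$ equal to $0,1,\dots,N-1$. Let $\sim$ be the equivalence relation on the set $\mathcal H_N$ of hourglass designs of order $N$ generated by $H\sim\mu(H)$ for admissible $\mu$. For $H\in\mathcal H_N$ let $n(H)$ be the number of normalized diagonal Latin squares of order $N$ agreeing with $H$ on all filled cells of $H$. Then for each $\sim$-class $C$, $n$ is constant on $C$, and the number of normalized diagonal Latin squares of order $N$ equals $\sum_{C} |C|\cdot n(H_C)$, where the sum runs over all $\sim$-classes $C$ of $\mathcal H_N$ and $H_C\in C$ is an arbitrary representative.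
   Context: A diagonal Latin square of order $N$ is an $N\times N$ array with entries in $\{0,\dots,N-1\}$ such that every row, every column, the main diagonal (cells $(i,i)$) and the main antidiagonal (cells $(i,N-1-i)$) each contain every element of $\{0,\dots,N-1\}$ exactly once; rows and columns are indexed $0,\dots,N-1$. It is normalized if its first row (row $0$) is $0,1,\dots,N-1$. A hourglass design of order $N$ is a partial $N\times N$ array in which exactly the cells of row $0$, row $N-1$, the main diagonal and the main antidiagonal are filled with symbols from $\{0,\dots,N-1\}$, the first row is $0,1,\dots,N-1$, and no symbol occurs twice among the filled cells of any row, any column, the main diagonal, or the main antidiagonal. *)

theory Defs
  imports Main "HOL-Combinatorics.Permutations"
begin

text \<open>Partial N x N arrays: cell (i,j) is filled with symbol s iff A (i,j) = Some s;
  cells outside {0..N-1} x {0..N-1} are required to be empty where relevant.\<close>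
type_synonym parr = "nat \<times> nat \<Rightarrow> nat option"

definition grid :: "nat \<Rightarrow> (nat \<times> nat) set" where
  "grid N = {(i,j). i < N \<and> j < N}"

definition diag_latin_square :: "nat \<Rightarrow> parr \<Rightarrow> bool" where
  "diag_latin_square N L \<longleftrightarrow>
     dom L = grid N \<and> ran L \<subseteq> {..<N} \<and>
     (\<forall>i<N. \<forall>s<N. card {j. j < N \<and> L (i,j) = Some s} = 1) \<and>
     (\<forall>j<N. \<forall>s<N. card {i. i < N \<and> L (i,j) = Some s} = 1) \<and>
     (\<forall>s<N. card {i. i < N \<and> L (i,i) = Some s} = 1) \<and>
     (\<forall>s<N. card {i. i < N \<and> L (i,N-1-i) = Some s} = 1)"

definition normalized :: "nat \<Rightarrow> parr \<Rightarrow> bool" where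
  "normalized N L \<longleftrightarrow> (\<forall>j<N. L (0,j) = Some j)"

definition hourglass_cells :: "nat \<Rightarrow> (nat \<times> nat) set" where
  "hourglass_cells N = {(i,j). i < N \<and> j < N \<and> (i = 0 \<or> i = N-1 \<or> j = i \<or> j = N-1-i)}"

definition hourglass :: "nat \<Rightarrow> parr \<Rightarrow> bool" where
  "hourglass N H \<longleftrightarrow>
     dom H = hourglass_cells N \<and> ran H \<subseteq> {..<N} \<and>
     (\<forall>j<N. H (0,j) = Some j) \<and>
     (\<forall>i<N. inj_on (\<lambda>j. H (i,j)) {j. j < N \<and> H (i,j) \<noteq> None}) \<and>
     (\<forall>j<N. inj_on (\<lambda>i. H (i,j)) {i. i < N \<and> H (i,j) \<noteq> None}) \<and>
     inj_on (\<lambda>i. H (i,i)) {i. i < N \<and> H (i,i) \<noteq> None} \<and>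
     inj_on (\<lambda>i. H (i,N-1-i)) {i. i < N \<and> H (i,N-1-i) \<noteq> None}"

definition hourglass_designs :: "nat \<Rightarrow> parr set" where
  "hourglass_designs N = {H. hourglass N H}"

definition ndls :: "nat \<Rightarrow> parr set" where
  "ndls N = {L. diag_latin_square N L \<and> normalized N L}"

definition agrees :: "parr \<Rightarrow> parr \<Rightarrow> bool" where
  "agrees H L \<longleftrightarrow> (\<forall>c. H c \<noteq> None \<longrightarrow> L c = H c)"

definition ncompl :: "nat \<Rightarrow> parr \<Rightarrow> nat" where
  "ncompl N H = card {L \<in> ndls N. agrees H L}"

definition refl_idx :: "nat \<Rightarrow> nat \<Rightarrow> nat" where
  "refl_idx N k = N - 1 - k"

definition admissible_pair :: "nat \<Rightarrow> (nat \<Rightarrow> nat) \<Rightarrow> (nat \<Rightarrow> nat) \<Rightarrow> bool" where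
  "admissible_pair N \<pi> \<rho> \<longleftrightarrow>
     \<pi> permutes {..<N} \<and>
     (\<forall>k<N. \<pi> (refl_idx N k) = refl_idx N (\<pi> k)) \<and>
     \<pi> 0 \<in> {0, N-1} \<and>
     ((\<forall>k<N. \<rho> k = \<pi> k) \<or> (\<forall>k<N. \<rho> k = refl_idx N (\<pi> k)))"

text \<open>T(A)[pi i][rho j] = A[i][j]\<close>
definition cell_transform :: "nat \<Rightarrow> (nat \<Rightarrow> nat) \<Rightarrow> (nat \<Rightarrow> nat) \<Rightarrow> parr \<Rightarrow> parr" where
  "cell_transform N \<pi> \<rho> A = (\<lambda>(a,b). if a < N \<and> b < N
      then A (inv_into {..<N} \<pi> a, inv_into {..<N} \<rho> b) else None)"

text \<open>tau: symbol s goes to the column index of s in the first row\<close>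
definition first_row_norm :: "nat \<Rightarrow> parr \<Rightarrow> nat \<Rightarrow> nat" where
  "first_row_norm N A s = (THE b. b < N \<and> A (0,b) = Some s)"

definition adm_map :: "nat \<Rightarrow> (nat \<Rightarrow> nat) \<Rightarrow> (nat \<Rightarrow> nat) \<Rightarrow> parr \<Rightarrow> parr" where
  "adm_map N \<pi> \<rho> A =
     (let B = cell_transform N \<pi> \<rho> A in (\<lambda>c. map_option (first_row_norm N B) (B c)))"

definition adm_step :: "nat \<Rightarrow> (parr \<times> parr) set" where
  "adm_step N = {(H, adm_map N \<pi> \<rho> H) | H \<pi> \<rho>.
      admissible_pair N \<pi> \<rho> \<and> H \<in> hourglass_designs N \<and> adm_map N \<pi> \<rho> H \<in> hourglass_designs N}"

definition hg_equiv :: "nat \<Rightarrow> (parr \<times> parr) set" where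
  "hg_equiv N = Restr ((adm_step N \<union> (adm_step N)\<inverse>)\<^sup>*) (hourglass_designs N)"

end

theory Submission
  imports Defs
begin

definition ctP :: "nat \<Rightarrow> (nat\<Rightarrow>nat) \<Rightarrow> (nat\<Rightarrow>nat) \<Rightarrow> parr \<Rightarrow> parr" where
 "ctP N P Q A = (\<lambda>(a,b). if a<N \<and> b<N then A (P a, Q b) else None)"

definition admP :: "nat \<Rightarrow> (nat\<Rightarrow>nat) \<Rightarrow> (nat\<Rightarrow>nat) \<Rightarrow> parr \<Rightarrow> parr" where
 "admP N P Q A = (let B = ctP N P Q A in (\<lambda>c. map_option (first_row_norm N B) (B c)))"

lemma adm_map_eq: "adm_map N \<pi> \<rho> = admP N (inv_into {..<N} \<pi>) (inv_into {..<N} \<rho>)"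
  by (intro ext) (simp add: adm_map_def admP_def cell_transform_def ctP_def)

definition good :: "nat \<Rightarrow> (nat\<Rightarrow>nat) \<Rightarrow> (nat\<Rightarrow>nat) \<Rightarrow> bool" where
 "good N P Q \<longleftrightarrow> bij_betw P {..<N} {..<N} \<and> bij_betw Q {..<N} {..<N} \<and> P 0 \<in> {0,N-1} \<and>
    (\<forall>i<N. P (N-1-i) = N-1-P i) \<and> ((\<forall>i<N. Q i = P i) \<or> (\<forall>i<N. Q i = N-1-P i))"

lemma bij_r: "bij_betw (\<lambda>k. N-1-k) {..<N::nat} {..<N}"
  by (rule bij_betw_byWitness[where f'="\<lambda>k. N-1-k"]) (auto simp: image_subset_iff)

lemma adm_good:
  assumes "admissible_pair N \<pi> \<rho>"
  shows "good N \<pi> \<rho>"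
proof -
  from assms have pp: "\<pi> permutes {..<N}" and comm: "\<forall>k<N. \<pi> (N-1-k) = N-1-\<pi> k"
    and p0: "\<pi> 0 \<in> {0,N-1}" and rr: "(\<forall>k<N. \<rho> k = \<pi> k) \<or> (\<forall>k<N. \<rho> k = N-1-\<pi> k)"
    by (auto simp: admissible_pair_def refl_idx_def)
  have bp: "bij_betw \<pi> {..<N} {..<N}" using pp by (rule permutes_imp_bij)
  have br: "bij_betw \<rho> {..<N} {..<N}"
  proof (cases "\<forall>k<N. \<rho> k = \<pi> k")
    case True then show ?thesis using bp by (subst bij_betw_cong[where g=\<pi>]) auto
  next
    case False with rr have "\<forall>k<N. \<rho> k = N-1-\<pi> k" by auto
    then have "bij_betw \<rho> {..<N} {..<N} = bij_betw ((\<lambda>k. N-1-k) \<circ> \<pi>) {..<N} {..<N}"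
      by (intro bij_betw_cong) auto
    then show ?thesis using bij_betw_trans[OF bp bij_r] by simp
  qed
  show ?thesis unfolding good_def using bp br p0 comm rr by auto
qed

lemma good_inv:
  assumes g: "good N P Q" and N: "2 \<le> N"
  shows "good N (inv_into {..<N} P) (inv_into {..<N} Q)"
proof -
  from g have bp: "bij_betw P {..<N} {..<N}" and bq: "bij_betw Q {..<N} {..<N}"
    and comm: "\<forall>k<N. P (N-1-k) = N-1-P k"
    and p0: "P 0 \<in> {0,N-1}" and rr: "(\<forall>k<N. Q k = P k) \<or> (\<forall>k<N. Q k = N-1-P k)"
    by (auto simp: good_def)
  let ?P = "inv_into {..<N} P"
  let ?Q = "inv_into {..<N} Q"
  have bP: "bij_betw ?P {..<N} {..<N}" using bp by (rule bij_betw_inv_into)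
  have bQ: "bij_betw ?Q {..<N} {..<N}" using bq by (rule bij_betw_inv_into)
  have Pl: "?P x < N" if "x<N" for x using bP that bij_betwE by blast
  have PP: "P (?P x) = x" if "x<N" for x using bp that by (simp add: bij_betw_inv_into_right)
  have injP: "inj_on P {..<N}" using bp bij_betw_def by blast
  have injQ: "inj_on Q {..<N}" using bq bij_betw_def by blast
  have P0: "?P 0 \<in> {0,N-1}"
  proof (cases "P 0 = 0")
    case True then show ?thesis using inv_into_f_eq[OF injP, of 0 0] N by auto
  next
    case False then have "P 0 = N-1" using p0 by auto
    then have "P (N-1) = 0" using comm N by (metis diff_zero zero_less_iff_neq_zero diff_self_eq_0 not_numeral_le_zero)
    then show ?thesis using inv_into_f_eq[OF injP, of "N-1" 0] N by auto
  qed
  have Pr: "?P (N-1-i) = N-1-?P i" if "i<N" for i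
  proof -
    have "P (N-1-?P i) = N-1-P(?P i)" using comm Pl[OF that] by auto
    also have "... = N-1-i" using PP[OF that] by simp
    finally have "P (N-1-?P i) = N-1-i" .
    then show ?thesis using that by (intro inv_into_f_eq[OF injP]) auto
  qed
  have Qc: "(\<forall>i<N. ?Q i = ?P i) \<or> (\<forall>i<N. ?Q i = N-1-?P i)"
  proof (cases "\<forall>k<N. Q k = P k")
    case True
    have "?Q i = ?P i" if "i<N" for i
      using Pl[OF that] True PP[OF that] by (intro inv_into_f_eq[OF injQ]) auto
    then show ?thesis by auto
  next
    case False with rr have rh: "\<forall>k<N. Q k = N-1-P k" by auto
    have "?Q i = N-1-?P i" if "i<N" for i
    proof -
      have "Q (N-1-?P i) = N-1-P(N-1-?P i)" using rh N by auto
      also have "... = N-1-(N-1-P(?P i))" using comm Pl[OF that] by auto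
      also have "... = i" using PP[OF that] that by auto
      finally have "Q (N-1-?P i) = i" .
      then show ?thesis using that by (intro inv_into_f_eq[OF injQ]) auto
    qed
    then show ?thesis by auto
  qed
  show ?thesis unfolding good_def using bP bQ P0 Pr Qc by auto
qed


definition fullrow :: "nat \<Rightarrow> parr \<Rightarrow> nat \<Rightarrow> bool" where
  "fullrow N A i \<longleftrightarrow> (\<forall>c<N. \<exists>s<N. A (i,c) = Some s) \<and> inj_on (\<lambda>c. A (i,c)) {..<N}"

lemma injD2: "inj_on (\<lambda>c. A (i,c)) {..<N} \<Longrightarrow> A (i,x) = A (i,y) \<Longrightarrow> x<N \<Longrightarrow> y<N \<Longrightarrow> x=y"
  unfolding inj_on_def by blast

lemma frn_eq:
  assumes "fullrow N B 0" "c < N" "B (0,c) = Some s"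
  shows "first_row_norm N B s = c"
proof -
  have inj: "inj_on (\<lambda>c. B (0,c)) {..<N}" using assms(1) by (simp add: fullrow_def)
  show ?thesis unfolding first_row_norm_def
  proof (rule the_equality)
    show "c < N \<and> B (0, c) = Some s" using assms by simp
    fix b assume "b < N \<and> B (0, b) = Some s"
    then show "b = c" using injD2[OF inj, of b c] assms(2,3) by auto
  qed
qed

lemma frn_bij:
  assumes "fullrow N B 0"
  shows "bij_betw (first_row_norm N B) {..<N} {..<N}"
proof -
  have ex: "\<forall>c<N. \<exists>s<N. B (0,c) = Some s" and inj: "inj_on (\<lambda>c. B (0,c)) {..<N}"
    using assms by (auto simp: fullrow_def)
  define h where "h c = the (B (0,c))" for c
  have hB: "B (0,c) = Some (h c)" "h c < N" if "c<N" for c using ex that by (auto simp: h_def)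
  have "inj_on h {..<N}"
  proof (rule inj_onI)
    fix x y assume "x \<in> {..<N}" "y \<in> {..<N}" "h x = h y"
    then show "x = y" using hB injD2[OF inj, of x y] by auto
  qed
  moreover have "h ` {..<N} \<subseteq> {..<N}" using hB by auto
  ultimately have surj: "h ` {..<N} = {..<N}" by (intro endo_inj_surj) auto
  show ?thesis
  proof (rule bij_betw_byWitness[where f'=h])
    show "\<forall>a\<in>{..<N}. h (first_row_norm N B a) = a"
    proof
      fix a assume "a \<in> {..<N}"
      then obtain c where c: "c < N" "h c = a" using surj by (metis imageE lessThan_iff)
      then show "h (first_row_norm N B a) = a" using frn_eq[OF assms c(1)] hB[OF c(1)] by simp
    qed
    show "\<forall>a'\<in>{..<N}. first_row_norm N B (h a') = a'"
      using frn_eq[OF assms] hB by auto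
    show "first_row_norm N B ` {..<N} \<subseteq> {..<N}"
    proof
      fix x assume "x \<in> first_row_norm N B ` {..<N}"
      then obtain a where a: "a < N" "x = first_row_norm N B a" by auto
      then obtain c where c: "c < N" "h c = a" using surj by (metis imageE lessThan_iff)
      then show "x \<in> {..<N}" using frn_eq[OF assms c(1)] hB[OF c(1)] a by simp
    qed
    show "h ` {..<N} \<subseteq> {..<N}" using hB by auto
  qed
qed

lemma ctP_in: "a < N \<Longrightarrow> b < N \<Longrightarrow> ctP N P Q A (a,b) = A (P a, Q b)"
  by (simp add: ctP_def)

lemma ctP_out: "\<not> (a < N \<and> b < N) \<Longrightarrow> ctP N P Q A (a,b) = None"
  by (auto simp: ctP_def)

lemma good_facts:
  assumes "good N P Q"
  shows "bij_betw P {..<N} {..<N}" "bij_betw Q {..<N} {..<N}" "\<And>x. x<N \<Longrightarrow> P x < N" "\<And>x. x<N \<Longrightarrow> Q x < N"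
    "inj_on P {..<N}" "inj_on Q {..<N}"
  using assms by (auto simp: good_def bij_betw_def)

lemma fullrow_ct:
  assumes g: "good N P Q" and f0: "fullrow N A 0" and f1: "fullrow N A (N-1)" and N: "2 \<le> N"
  shows "fullrow N (ctP N P Q A) 0"
proof -
  have P0: "P 0 \<in> {0, N-1}" using g by (simp add: good_def)
  then have fr: "fullrow N A (P 0)" using f0 f1 by auto
  have "\<forall>c<N. \<exists>s<N. ctP N P Q A (0,c) = Some s"
    using fr good_facts(4)[OF g] N by (auto simp: fullrow_def ctP_in)
  moreover have "inj_on (\<lambda>c. ctP N P Q A (0,c)) {..<N}"
  proof (rule inj_onI)
    fix x y assume xy: "x \<in> {..<N}" "y \<in> {..<N}" "ctP N P Q A (0, x) = ctP N P Q A (0, y)"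
    then have "A (P 0, Q x) = A (P 0, Q y)" using N by (simp add: ctP_in)
    then have "Q x = Q y" using fr good_facts(4)[OF g] xy(1,2) injD2[of A "P 0" N "Q x" "Q y"] by (auto simp: fullrow_def)
    then show "x = y" using good_facts(6)[OF g] xy(1,2) by (auto simp: inj_on_def)
  qed
  ultimately show ?thesis by (simp add: fullrow_def)
qed


lemma card_reindex:
  assumes "bij_betw \<sigma> {..<N} {..<N}"
  shows "card {x. x<N \<and> R (\<sigma> x)} = card {y. y<(N::nat) \<and> R y}"
proof -
  have "bij_betw \<sigma> {x. x<N \<and> R (\<sigma> x)} {y. y<N \<and> R y}"
    unfolding bij_betw_def
  proof
    show "inj_on \<sigma> {x. x < N \<and> R (\<sigma> x)}"
      using assms by (auto simp: bij_betw_def intro: inj_on_subset)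
    show "\<sigma> ` {x. x < N \<and> R (\<sigma> x)} = {y. y < N \<and> R y}"
    proof
      show "\<sigma> ` {x. x < N \<and> R (\<sigma> x)} \<subseteq> {y. y < N \<and> R y}" using assms by (auto dest: bij_betwE)
      show "{y. y < N \<and> R y} \<subseteq> \<sigma> ` {x. x < N \<and> R (\<sigma> x)}"
      proof
        fix y assume y: "y \<in> {y. y < N \<and> R y}"
        then have "y \<in> \<sigma> ` {..<N}" using assms by (simp add: bij_betw_def)
        then obtain x where "x < N" "y = \<sigma> x" by auto
        then show "y \<in> \<sigma> ` {x. x < N \<and> R (\<sigma> x)}" using y by auto
      qed
    qed
  qed
  then show ?thesis by (rule bij_betw_same_card)
qed

lemma val_pre:
  assumes "bij_betw f {..<N} {..<N}" "ran L \<subseteq> {..<N}" "s < (N::nat)"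
  shows "\<exists>t<N. \<forall>c. (map_option f (L c) = Some s) = (L c = Some t)"
proof -
  have "s \<in> f ` {..<N}" using assms by (simp add: bij_betw_def)
  then obtain t where t: "t < N" "f t = s" by auto
  have "(map_option f (L c) = Some s) = (L c = Some t)" for c
  proof (cases "L c")
    case None then show ?thesis by simp
  next
    case (Some x)
    then have "x \<in> ran L" by (auto simp: ran_def)
    then have "x < N" using assms(2) by auto
    then have "(f x = s) = (x = t)" using t assms(1) by (auto simp: bij_betw_def inj_on_def)
    then show ?thesis using Some by simp
  qed
  then show ?thesis using t by auto
qed

lemma card1_uniq: "card {x. x < (N::nat) \<and> R x} = 1 \<Longrightarrow> a < N \<Longrightarrow> R a \<Longrightarrow> b < N \<Longrightarrow> R b \<Longrightarrow> a = b"
  by (metis (mono_tags, lifting) card_1_singletonE mem_Collect_eq singletonD)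

lemma ndls_fullrow:
  assumes "L \<in> ndls N" "i < N"
  shows "fullrow N L i"
proof -
  have d: "dom L = grid N" "ran L \<subseteq> {..<N}" and r: "\<forall>i<N. \<forall>s<N. card {j. j < N \<and> L (i,j) = Some s} = 1"
    using assms by (auto simp: ndls_def diag_latin_square_def)
  have "\<forall>c<N. \<exists>s<N. L (i,c) = Some s"
  proof (intro allI impI)
    fix c assume "c < N"
    then have "(i,c) \<in> dom L" using d assms(2) by (simp add: grid_def)
    then obtain s where "L (i,c) = Some s" by auto
    moreover then have "s \<in> ran L" by (auto simp: ran_def)
    ultimately show "\<exists>s<N. L (i,c) = Some s" using d by auto
  qed
  moreover have "inj_on (\<lambda>c. L (i,c)) {..<N}"
  proof (rule inj_onI)
    fix x y assume xy: "x \<in> {..<N}" "y \<in> {..<N}" "L (i, x) = L (i, y)"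
    then obtain s where s: "s < N" "L (i,x) = Some s" using calculation by auto
    then show "x = y" using card1_uniq[OF r[rule_format, OF assms(2) s(1)]] xy by auto
  qed
  ultimately show ?thesis by (simp add: fullrow_def)
qed

lemma admP_alt: "admP N P Q A = (\<lambda>c. map_option (first_row_norm N (ctP N P Q A)) (ctP N P Q A c))"
  by (simp add: admP_def Let_def)

lemma admP_ndls:
  assumes g: "good N P Q" and N: "2 \<le> N" and L: "L \<in> ndls N"
  shows "admP N P Q L \<in> ndls N"
proof -
  define B where "B = ctP N P Q L"
  define f where "f = first_row_norm N B"
  define M where "M = admP N P Q L"
  have M: "M = (\<lambda>c. map_option f (B c))" by (simp add: M_def admP_alt B_def f_def)
  have dls: "dom L = grid N" "ran L \<subseteq> {..<N}"
    and rows: "\<forall>i<N. \<forall>s<N. card {j. j < N \<and> L (i,j) = Some s} = 1"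
    and cols: "\<forall>j<N. \<forall>s<N. card {i. i < N \<and> L (i,j) = Some s} = 1"
    and dg: "\<forall>s<N. card {i. i < N \<and> L (i,i) = Some s} = 1"
    and adg: "\<forall>s<N. card {i. i < N \<and> L (i,N-1-i) = Some s} = 1"
    and nL: "\<forall>j<N. L (0,j) = Some j"
    using L by (auto simp: ndls_def diag_latin_square_def normalized_def)
  have fB: "fullrow N B 0" unfolding B_def
    using fullrow_ct[OF g ndls_fullrow[OF L] ndls_fullrow[OF L] N] N by auto
  have bf: "bij_betw f {..<N} {..<N}" unfolding f_def by (rule frn_bij[OF fB])
  have bP: "bij_betw P {..<N} {..<N}" and bQ: "bij_betw Q {..<N} {..<N}"
    and Pl: "\<And>x. x<N \<Longrightarrow> P x < N" and Ql: "\<And>x. x<N \<Longrightarrow> Q x < N"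
    using good_facts[OF g] by auto
  have Pr: "\<forall>i<N. P (N-1-i) = N-1-P i" and Qc: "(\<forall>i<N. Q i = P i) \<or> (\<forall>i<N. Q i = N-1-P i)"
    using g by (auto simp: good_def)
  have Mv: "M (a,b) = map_option f (L (P a, Q b))" if "a<N" "b<N" for a b
    using that by (simp add: M B_def ctP_in)
  have Mo: "M (a,b) = None" if "\<not>(a<N \<and> b<N)" for a b
    using that by (simp add: M B_def ctP_out)
  have Lsome: "\<exists>s<N. L (a,b) = Some s" if "a<N" "b<N" for a b
    using ndls_fullrow[OF L that(1)] that(2) by (auto simp: fullrow_def)
  have line: "{x. x<N \<and> M (\<alpha> x, \<beta> x) = Some s} = {x. x<N \<and> L (P (\<alpha> x), Q (\<beta> x)) = Some t}"
    if "\<forall>x<N. \<alpha> x < N \<and> \<beta> x < N" "\<forall>c. (map_option f (L c) = Some s) = (L c = Some t)" for \<alpha> \<beta> s t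
  proof -
    have "(M (\<alpha> x, \<beta> x) = Some s) = (L (P (\<alpha> x), Q (\<beta> x)) = Some t)" if "x<N" for x
    proof -
      have "M (\<alpha> x, \<beta> x) = map_option f (L (P (\<alpha> x), Q (\<beta> x)))"
        using Mv \<open>\<forall>x<N. \<alpha> x < N \<and> \<beta> x < N\<close> that by auto
      then show ?thesis using \<open>\<forall>c. (map_option f (L c) = Some s) = (L c = Some t)\<close> by simp
    qed
    then show ?thesis by auto
  qed
  have dom: "dom M = grid N"
  proof
    show "dom M \<subseteq> grid N"
    proof
      fix c assume "c \<in> dom M"
      then obtain a b where "c = (a,b)" "M (a,b) \<noteq> None" by (cases c) auto
      then show "c \<in> grid N" unfolding grid_def using Mo[of a b] by (cases "a<N \<and> b<N") auto
    qed
    show "grid N \<subseteq> dom M"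
    proof
      fix c assume "c \<in> grid N"
      then obtain a b where c: "c = (a,b)" "a<N" "b<N" by (auto simp: grid_def)
      then show "c \<in> dom M" using Mv Lsome[OF Pl[OF c(2)] Ql[OF c(3)]] by auto
    qed
  qed
  have ran: "ran M \<subseteq> {..<N}"
  proof
    fix s assume "s \<in> ran M"
    then obtain a b where ab: "M (a,b) = Some s" by (auto simp: ran_def)
    then have "a<N \<and> b<N" using Mo[of a b] by (cases "a<N \<and> b<N") auto
    then have "a<N" "b<N" by auto
    then obtain t where t: "t<N" "L (P a, Q b) = Some t" using Lsome[OF Pl[OF \<open>a<N\<close>] Ql[OF \<open>b<N\<close>]] by blast
    have "M (a,b) = Some (f t)" using Mv[OF \<open>a<N\<close> \<open>b<N\<close>] t by simp
    then have "s = f t" using ab by simp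
    then show "s \<in> {..<N}" using bf t(1) by (auto dest: bij_betwE)
  qed
  have nM: "\<forall>j<N. M (0,j) = Some j"
  proof (intro allI impI)
    fix j assume j: "j<N"
    obtain s where s: "s<N" "B (0,j) = Some s" using fB j by (auto simp: fullrow_def)
    then have "f s = j" unfolding f_def using frn_eq[OF fB j] by simp
    then show "M (0,j) = Some j" using s by (simp add: M)
  qed
  have rM: "\<forall>i<N. \<forall>s<N. card {j. j < N \<and> M (i,j) = Some s} = 1"
  proof (intro allI impI)
    fix i s assume i: "i<N" and s: "s<N"
    obtain t where t: "t<N" "\<forall>c. (map_option f (L c) = Some s) = (L c = Some t)"
      using val_pre[OF bf dls(2) s] by blast
    have "{j. j < N \<and> M (i,j) = Some s} = {j. j<N \<and> L (P i, Q j) = Some t}"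
      using line[of "\<lambda>_. i" "\<lambda>j. j", OF _ t(2)] i by simp
    also have "card \<dots> = card {j. j<N \<and> L (P i, j) = Some t}"
      using card_reindex[OF bQ, of "\<lambda>y. L (P i, y) = Some t"] by simp
    also have "\<dots> = 1" using rows Pl[OF i] t(1) by auto
    finally show "card {j. j < N \<and> M (i,j) = Some s} = 1" .
  qed
  have cM: "\<forall>j<N. \<forall>s<N. card {i. i < N \<and> M (i,j) = Some s} = 1"
  proof (intro allI impI)
    fix j s assume j: "j<N" and s: "s<N"
    obtain t where t: "t<N" "\<forall>c. (map_option f (L c) = Some s) = (L c = Some t)"
      using val_pre[OF bf dls(2) s] by blast
    have "{i. i < N \<and> M (i,j) = Some s} = {i. i<N \<and> L (P i, Q j) = Some t}"
      using line[of "\<lambda>i. i" "\<lambda>_. j", OF _ t(2)] j by simp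
    also have "card \<dots> = card {i. i<N \<and> L (i, Q j) = Some t}"
      using card_reindex[OF bP, of "\<lambda>y. L (y, Q j) = Some t"] by simp
    also have "\<dots> = 1" using cols Ql[OF j] t(1) by auto
    finally show "card {i. i < N \<and> M (i,j) = Some s} = 1" .
  qed
  have dM: "\<forall>s<N. card {i. i < N \<and> M (i,i) = Some s} = 1"
  proof (intro allI impI)
    fix s assume s: "s<N"
    obtain t where t: "t<N" "\<forall>c. (map_option f (L c) = Some s) = (L c = Some t)"
      using val_pre[OF bf dls(2) s] by blast
    have e: "{i. i < N \<and> M (i,i) = Some s} = {i. i<N \<and> L (P i, Q i) = Some t}"
      using line[of "\<lambda>i. i" "\<lambda>i. i", OF _ t(2)] by simp
    show "card {i. i < N \<and> M (i,i) = Some s} = 1"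
    proof (cases "\<forall>i<N. Q i = P i")
      case True
      then have "{i. i<N \<and> L (P i, Q i) = Some t} = {i. i<N \<and> L (P i, P i) = Some t}" by auto
      moreover have "card \<dots> = card {i. i<N \<and> L (i, i) = Some t}"
        using card_reindex[OF bP, of "\<lambda>y. L (y, y) = Some t"] by simp
      ultimately show ?thesis using e dg t(1) by auto
    next
      case False
      then have Q: "\<forall>i<N. Q i = N-1-P i" using Qc by auto
      then have "{i. i<N \<and> L (P i, Q i) = Some t} = {i. i<N \<and> L (P i, N-1-P i) = Some t}" by auto
      moreover have "card \<dots> = card {i. i<N \<and> L (i, N-1-i) = Some t}"
        using card_reindex[OF bP, of "\<lambda>y. L (y, N-1-y) = Some t"] by simp
      ultimately show ?thesis using e adg t(1) by auto
    qed
  qed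
  have aM: "\<forall>s<N. card {i. i < N \<and> M (i,N-1-i) = Some s} = 1"
  proof (intro allI impI)
    fix s assume s: "s<N"
    obtain t where t: "t<N" "\<forall>c. (map_option f (L c) = Some s) = (L c = Some t)"
      using val_pre[OF bf dls(2) s] by blast
    have e: "{i. i < N \<and> M (i,N-1-i) = Some s} = {i. i<N \<and> L (P i, Q (N-1-i)) = Some t}"
      using line[of "\<lambda>i. i" "\<lambda>i. N-1-i", OF _ t(2)] by simp
    show "card {i. i < N \<and> M (i,N-1-i) = Some s} = 1"
    proof (cases "\<forall>i<N. Q i = P i")
      case True
      then have "{i. i<N \<and> L (P i, Q (N-1-i)) = Some t} = {i. i<N \<and> L (P i, N-1-P i) = Some t}"
        using Pr by auto
      moreover have "card \<dots> = card {i. i<N \<and> L (i, N-1-i) = Some t}"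
        using card_reindex[OF bP, of "\<lambda>y. L (y, N-1-y) = Some t"] by simp
      ultimately show ?thesis using e adg t(1) by auto
    next
      case False
      then have Q: "\<forall>i<N. Q i = N-1-P i" using Qc by auto
      have "Q (N-1-i) = P i" if "i<N" for i
      proof -
        have "Q (N-1-i) = N-1-P(N-1-i)" using Q that by auto
        also have "\<dots> = N-1-(N-1-P i)" using Pr that by auto
        also have "\<dots> = P i" using Pl[OF that] by auto
        finally show ?thesis .
      qed
      then have "{i. i<N \<and> L (P i, Q (N-1-i)) = Some t} = {i. i<N \<and> L (P i, P i) = Some t}" by auto
      moreover have "card \<dots> = card {i. i<N \<and> L (i, i) = Some t}"
        using card_reindex[OF bP, of "\<lambda>y. L (y, y) = Some t"] by simp
      ultimately show ?thesis using e dg t(1) by auto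
    qed
  qed
  show ?thesis unfolding M_def[symmetric] ndls_def diag_latin_square_def normalized_def
    using dom ran nM rM cM dM aM by auto
qed


lemma ctP_cong: "(\<forall>a<N. P1 a = P2 a) \<Longrightarrow> (\<forall>b<N. Q1 b = Q2 b) \<Longrightarrow> ctP N P1 Q1 = ctP N P2 Q2"
  by (intro ext) (auto simp: ctP_def)

lemma admP_cong:
  assumes "\<forall>a<N. P1 a = P2 a" "\<forall>b<N. Q1 b = Q2 b"
  shows "admP N P1 Q1 = admP N P2 Q2"
proof -
  have e: "ctP N P1 Q1 = ctP N P2 Q2" using assms by (rule ctP_cong)
  show ?thesis by (intro ext) (simp add: admP_alt e)
qed

lemma agrees_admP:
  assumes g: "good N P Q" and N: "2 \<le> N" and f0: "fullrow N H 0" and f1: "fullrow N H (N-1)"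
    and ag: "agrees H L"
  shows "agrees (admP N P Q H) (admP N P Q L)"
proof -
  define BH where "BH = ctP N P Q H"
  define BL where "BL = ctP N P Q L"
  have agB: "BL c = BH c" if "BH c \<noteq> None" for c
  proof -
    obtain a b where c: "c = (a,b)" by (cases c)
    show ?thesis
    proof (cases "a<N \<and> b<N")
      case True
      then show ?thesis using that ag by (auto simp: c BH_def BL_def ctP_in agrees_def)
    next
      case False
      then show ?thesis using that by (simp add: c BH_def ctP_out)
    qed
  qed
  have fB: "fullrow N BH 0" unfolding BH_def using fullrow_ct[OF g f0 f1 N] .
  have "\<forall>b<N. BH (0,b) \<noteq> None" using fB by (auto simp: fullrow_def)
  then have "\<forall>b<N. BL (0,b) = BH (0,b)" using agB by auto
  then have fe: "first_row_norm N BL = first_row_norm N BH"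
    unfolding first_row_norm_def by (intro ext) (metis (no_types, lifting))
  show ?thesis unfolding agrees_def admP_alt BH_def[symmetric] BL_def[symmetric] fe
    using agB by auto
qed

lemma admP_inv:
  assumes g: "good N P Q" and N: "2 \<le> N" and d: "dom A \<subseteq> grid N" and r: "ran A \<subseteq> {..<N}"
    and n: "\<forall>j<N. A (0,j) = Some j" and f0: "fullrow N A 0" and f1: "fullrow N A (N-1)"
  shows "admP N (inv_into {..<N} P) (inv_into {..<N} Q) (admP N P Q A) = A"
proof -
  let ?P = "inv_into {..<N} P" and ?Q = "inv_into {..<N} Q"
  have bP: "bij_betw P {..<N} {..<N}" and bQ: "bij_betw Q {..<N} {..<N}" using good_facts[OF g] by auto
  have Pb: "bij_betw ?P {..<N} {..<N}" using bP by (rule bij_betw_inv_into)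
  have PP: "P (?P a) = a" "?P a < N" if "a<N" for a
    using bP that bij_betwE[OF Pb] by (auto simp: bij_betw_inv_into_right)
  have Qb: "bij_betw ?Q {..<N} {..<N}" using bQ by (rule bij_betw_inv_into)
  have QQ: "Q (?Q a) = a" "?Q a < N" if "a<N" for a
    using bQ that bij_betwE[OF Qb] by (auto simp: bij_betw_inv_into_right)
  define B where "B = ctP N P Q A"
  define f where "f = first_row_norm N B"
  have fB: "fullrow N B 0" unfolding B_def using fullrow_ct[OF g f0 f1 N] .
  have bf: "bij_betw f {..<N} {..<N}" unfolding f_def by (rule frn_bij[OF fB])
  have C: "admP N P Q A = (\<lambda>c. map_option f (B c))" by (simp add: admP_alt B_def f_def)
  define D where "D = (\<lambda>c. map_option f (A c))"
  have ct2: "ctP N ?P ?Q (admP N P Q A) = D"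
  proof
    fix c :: "nat \<times> nat"
    obtain a b where c: "c = (a,b)" by (cases c)
    show "ctP N ?P ?Q (admP N P Q A) c = D c"
    proof (cases "a<N \<and> b<N")
      case True
      then show ?thesis by (simp add: c C D_def B_def ctP_in PP QQ)
    next
      case False
      then have "A (a,b) = None" using d by (auto simp: grid_def)
      then show ?thesis using False by (simp add: c D_def ctP_out)
    qed
  qed
  have D0: "D (0,x) = Some (f x)" if "x<N" for x using n that by (simp add: D_def)
  have fD: "fullrow N D 0"
    unfolding fullrow_def
  proof
    show "\<forall>c<N. \<exists>s<N. D (0, c) = Some s" using D0 bf by (auto dest: bij_betwE)
    show "inj_on (\<lambda>c. D (0, c)) {..<N}"
    proof (rule inj_onI)
      fix x y assume "x \<in> {..<N}" "y \<in> {..<N}" "D (0, x) = D (0, y)"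
      then show "x = y" using D0 bf by (auto simp: bij_betw_def inj_on_def)
    qed
  qed
  have gf: "first_row_norm N D (f x) = x" if "x<N" for x using frn_eq[OF fD that D0[OF that]] .
  show ?thesis
  proof
    fix c :: "nat \<times> nat"
    have "admP N ?P ?Q (admP N P Q A) c = map_option (first_row_norm N D) (D c)"
      by (simp only: admP_alt[of N ?P ?Q] ct2)
    also have "\<dots> = A c"
    proof (cases "A c")
      case None then show ?thesis by (simp add: D_def)
    next
      case (Some x)
      then have "x \<in> ran A" using ranI by metis
      then have "x < N" using r by auto
      then show ?thesis using Some gf by (simp add: D_def)
    qed
    finally show "admP N ?P ?Q (admP N P Q A) c = A c" .
  qed
qed

lemma hg_facts:
  assumes h: "hourglass N H" and N: "2 \<le> N"
  shows "fullrow N H 0" "fullrow N H (N-1)" "dom H \<subseteq> grid N" "ran H \<subseteq> {..<N}" "\<forall>j<N. H (0,j) = Some j"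
proof -
  have d: "dom H = hourglass_cells N" and r: "ran H \<subseteq> {..<N}" and n: "\<forall>j<N. H (0,j) = Some j"
    and ri: "\<forall>i<N. inj_on (\<lambda>j. H (i,j)) {j. j < N \<and> H (i,j) \<noteq> None}"
    using h by (auto simp: hourglass_def)
  show "dom H \<subseteq> grid N" using d by (auto simp: hourglass_cells_def grid_def)
  show "ran H \<subseteq> {..<N}" "\<forall>j<N. H (0,j) = Some j" using r n by auto
  show "fullrow N H 0" using n by (auto simp: fullrow_def inj_on_def)
  have ex: "\<forall>c<N. \<exists>s<N. H (N-1, c) = Some s"
  proof (intro allI impI)
    fix c assume "c<N"
    then have "(N-1,c) \<in> dom H" using d N by (auto simp: hourglass_cells_def)
    then obtain s where "H (N-1,c) = Some s" by auto
    moreover then have "s \<in> ran H" by (auto simp: ran_def)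
    ultimately show "\<exists>s<N. H (N-1,c) = Some s" using r by auto
  qed
  then have "{j. j < N \<and> H (N-1,j) \<noteq> None} = {..<N}" by auto
  moreover have "N-1 < N" using N by simp
  then have "inj_on (\<lambda>j. H (N-1,j)) {j. j < N \<and> H (N-1,j) \<noteq> None}" using ri by blast
  ultimately have "inj_on (\<lambda>j. H (N-1,j)) {..<N}" by simp
  then show "fullrow N H (N-1)" using ex by (simp add: fullrow_def)
qed


lemma ndls_facts:
  assumes "L \<in> ndls N"
  shows "dom L \<subseteq> grid N" "ran L \<subseteq> {..<N}" "\<forall>j<N. L (0,j) = Some j"
  using assms by (auto simp: ndls_def diag_latin_square_def normalized_def)

lemma ncompl_step:
  assumes g: "good N P Q" and N: "2 \<le> N" and h: "hourglass N H" and h': "hourglass N (admP N P Q H)"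
  shows "ncompl N H = ncompl N (admP N P Q H)"
proof -
  let ?P = "inv_into {..<N} P" and ?Q = "inv_into {..<N} Q"
  let ?f = "admP N P Q" and ?g = "admP N ?P ?Q"
  have g': "good N ?P ?Q" using good_inv[OF g N] .
  have bP: "bij_betw P {..<N} {..<N}" and bQ: "bij_betw Q {..<N} {..<N}" using good_facts[OF g] by auto
  have inv2: "admP N (inv_into {..<N} ?P) (inv_into {..<N} ?Q) = ?f"
    by (rule admP_cong) (auto simp: inv_into_inv_into_eq[OF bP] inv_into_inv_into_eq[OF bQ])
  define H' where "H' = ?f H"
  note hf = hg_facts[OF h N] and hf' = hg_facts[OF h'[folded H'_def] N]
  have gH': "?g H' = H" unfolding H'_def using admP_inv[OF g N hf(3,4,5,1,2)] .
  have "bij_betw ?f {L \<in> ndls N. agrees H L} {L \<in> ndls N. agrees H' L}"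
  proof (rule bij_betw_byWitness[where f'="?g"])
    show "\<forall>L\<in>{L \<in> ndls N. agrees H L}. ?g (?f L) = L"
    proof
      fix L assume "L \<in> {L \<in> ndls N. agrees H L}"
      then have L: "L \<in> ndls N" by simp
      show "?g (?f L) = L" using admP_inv[OF g N ndls_facts[OF L] ndls_fullrow[OF L] ndls_fullrow[OF L]] N by simp
    qed
    show "\<forall>L\<in>{L \<in> ndls N. agrees H' L}. ?f (?g L) = L"
    proof
      fix L assume "L \<in> {L \<in> ndls N. agrees H' L}"
      then have L: "L \<in> ndls N" by simp
      show "?f (?g L) = L" using admP_inv[OF g' N ndls_facts[OF L] ndls_fullrow[OF L] ndls_fullrow[OF L]] N inv2 by simp
    qed
    show "?f ` {L \<in> ndls N. agrees H L} \<subseteq> {L \<in> ndls N. agrees H' L}"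
      using admP_ndls[OF g N] agrees_admP[OF g N hf(1,2)] by (auto simp: H'_def)
    show "?g ` {L \<in> ndls N. agrees H' L} \<subseteq> {L \<in> ndls N. agrees H L}"
      using admP_ndls[OF g' N] agrees_admP[OF g' N hf'(1,2)] gH' by auto
  qed
  then show ?thesis unfolding ncompl_def H'_def by (rule bij_betw_same_card)
qed

lemma step_eq:
  assumes "(x,y) \<in> adm_step N" "2 \<le> N"
  shows "ncompl N x = ncompl N y"
proof -
  obtain \<pi> \<rho> where y: "y = adm_map N \<pi> \<rho> x" and a: "admissible_pair N \<pi> \<rho>"
    and hx: "x \<in> hourglass_designs N" and hy: "adm_map N \<pi> \<rho> x \<in> hourglass_designs N"
    using assms(1) unfolding adm_step_def by blast
  have g: "good N (inv_into {..<N} \<pi>) (inv_into {..<N} \<rho>)" using good_inv[OF adm_good[OF a] assms(2)] .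
  show ?thesis unfolding y adm_map_eq
    using ncompl_step[OF g assms(2)] hx hy by (simp add: hourglass_designs_def adm_map_eq)
qed

definition restrH :: "nat \<Rightarrow> parr \<Rightarrow> parr" where
  "restrH N L = (\<lambda>c. if c \<in> hourglass_cells N then L c else None)"

lemma restrH_hg:
  assumes L: "L \<in> ndls N" and N: "2 \<le> N"
  shows "hourglass N (restrH N L)"
proof -
  let ?R = "restrH N L"
  have dls: "dom L = grid N" "ran L \<subseteq> {..<N}"
    and rows: "\<forall>i<N. \<forall>s<N. card {j. j < N \<and> L (i,j) = Some s} = 1"
    and cols: "\<forall>j<N. \<forall>s<N. card {i. i < N \<and> L (i,j) = Some s} = 1"
    and dg: "\<forall>s<N. card {i. i < N \<and> L (i,i) = Some s} = 1"
    and adg: "\<forall>s<N. card {i. i < N \<and> L (i,N-1-i) = Some s} = 1"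
    and nL: "\<forall>j<N. L (0,j) = Some j"
    using L by (auto simp: ndls_def diag_latin_square_def normalized_def)
  have RL: "?R c = L c" if "?R c \<noteq> None" for c using that by (auto simp: restrH_def split: if_splits)
  have Ls: "s < N" if "L c = Some s" for c s using that dls(2) ranI by fastforce
  have hg: "hourglass_cells N \<subseteq> grid N" by (auto simp: hourglass_cells_def grid_def)
  have Lnn: "L c \<noteq> None" if "c \<in> hourglass_cells N" for c using that hg dls(1) by (metis domIff subsetD)
  have dom: "dom ?R = hourglass_cells N"
  proof (rule set_eqI)
    fix c show "c \<in> dom ?R \<longleftrightarrow> c \<in> hourglass_cells N" using Lnn by (simp add: restrH_def domIff)
  qed
  have ran: "ran ?R \<subseteq> {..<N}"
  proof
    fix s assume "s \<in> ran ?R"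
    then obtain c where "?R c = Some s" by (auto simp: ran_def)
    then show "s \<in> {..<N}" using RL Ls by fastforce
  qed
  have n: "\<forall>j<N. ?R (0,j) = Some j" using nL by (auto simp: restrH_def hourglass_cells_def)
  have gen: "inj_on (\<lambda>x. ?R (\<alpha> x)) {x. x < N \<and> ?R (\<alpha> x) \<noteq> None}"
    if "\<forall>s<N. card {x. x < N \<and> L (\<alpha> x) = Some s} = 1" for \<alpha>
  proof (rule inj_onI)
    fix x y assume x: "x \<in> {x. x < N \<and> ?R (\<alpha> x) \<noteq> None}" and y: "y \<in> {x. x < N \<and> ?R (\<alpha> x) \<noteq> None}"
      and e: "?R (\<alpha> x) = ?R (\<alpha> y)"
    obtain s where s: "?R (\<alpha> x) = Some s" using x by auto
    then have sx: "L (\<alpha> x) = Some s" using RL by fastforce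
    have sy: "L (\<alpha> y) = Some s" using RL e s by (metis option.distinct(1))
    have "s < N" using Ls sx .
    then show "x = y" using card1_uniq[of N "\<lambda>x. L (\<alpha> x) = Some s", OF that[rule_format]] x y sx sy by auto
  qed
  have r: "\<forall>i<N. inj_on (\<lambda>j. ?R (i,j)) {j. j < N \<and> ?R (i,j) \<noteq> None}"
    using gen[of "\<lambda>j. (i,j)" for i] rows by auto
  have c: "\<forall>j<N. inj_on (\<lambda>i. ?R (i,j)) {i. i < N \<and> ?R (i,j) \<noteq> None}"
    using gen[of "\<lambda>i. (i,j)" for j] cols by auto
  have d: "inj_on (\<lambda>i. ?R (i,i)) {i. i < N \<and> ?R (i,i) \<noteq> None}"
    using gen[of "\<lambda>i. (i,i)"] dg by auto
  have a: "inj_on (\<lambda>i. ?R (i,N-1-i)) {i. i < N \<and> ?R (i,N-1-i) \<noteq> None}"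
    using gen[of "\<lambda>i. (i,N-1-i)"] adg by auto
  show ?thesis unfolding hourglass_def using dom ran n r c d a by blast
qed

lemma restrH_unique:
  assumes "hourglass N H" "agrees H L"
  shows "H = restrH N L"
proof
  fix c
  have d: "dom H = hourglass_cells N" using assms(1) by (simp add: hourglass_def)
  show "H c = restrH N L c"
  proof (cases "c \<in> hourglass_cells N")
    case True
    then have "H c \<noteq> None" using d by auto
    then have "L c = H c" using assms(2) unfolding agrees_def by blast
    then show ?thesis using True by (simp add: restrH_def)
  next
    case False
    then show ?thesis using d by (auto simp: restrH_def)
  qed
qed


lemma finite_grid: "finite (grid N)"
proof -
  have "grid N \<subseteq> {..<N} \<times> {..<N}" by (auto simp: grid_def)
  then show ?thesis by (rule finite_subset) auto
qed

lemma finite_HD: "finite (hourglass_designs N)"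
proof -
  have "finite (hourglass_cells N)"
    by (rule finite_subset[OF _ finite_grid[of N]]) (auto simp: hourglass_cells_def grid_def)
  then have "finite {m. dom m = hourglass_cells N \<and> ran m \<subseteq> {..<N}}"
    by (intro finite_set_of_finite_maps) auto
  moreover have "hourglass_designs N \<subseteq> {m. dom m = hourglass_cells N \<and> ran m \<subseteq> {..<N}}"
    by (auto simp: hourglass_designs_def hourglass_def)
  ultimately show ?thesis by (rule finite_subset[rotated])
qed

lemma finite_ndls: "finite (ndls N)"
proof -
  have "finite {m. dom m = grid N \<and> ran m \<subseteq> {..<N}}"
    by (intro finite_set_of_finite_maps finite_grid) auto
  moreover have "ndls N \<subseteq> {m. dom m = grid N \<and> ran m \<subseteq> {..<N}}"
    by (auto simp: ndls_def diag_latin_square_def)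
  ultimately show ?thesis by (rule finite_subset[rotated])
qed

theorem corollary1:
  fixes N :: nat
  assumes "N \<ge> 2"
  shows "(\<forall>C \<in> hourglass_designs N // hg_equiv N. \<forall>H \<in> C. \<forall>H' \<in> C.
            ncompl N H = ncompl N H') \<and>
         (\<forall>rep. (\<forall>C \<in> hourglass_designs N // hg_equiv N. rep C \<in> C) \<longrightarrow>
            card (ndls N) =
              (\<Sum>C \<in> hourglass_designs N // hg_equiv N. card C * ncompl N (rep C)))"
proof -
  let ?HD = "hourglass_designs N" and ?E = "hg_equiv N"
  let ?R = "adm_step N \<union> (adm_step N)\<inverse>"
  have Rst: "ncompl N x = ncompl N y" if "(x,y) \<in> ?R" for x y
    using that step_eq[OF _ assms] by (metis Un_iff converse_iff)
  have Rs: "ncompl N x = ncompl N y" if "(x,y) \<in> ?R\<^sup>*" for x y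
    using that
  proof (induction rule: rtrancl_induct)
    case base then show ?case by simp
  next
    case (step y z) then show ?case using Rst by simp
  qed
  have symR: "sym (?R\<^sup>*)" by (intro sym_rtrancl sym_Un_converse)
  have eqv: "equiv ?HD ?E"
  proof (rule equivI)
    show "?E \<subseteq> ?HD \<times> ?HD" by (auto simp: hg_equiv_def)
    show "refl_on ?HD ?E" by (auto simp: hg_equiv_def refl_on_def)
    show "sym ?E" using symR unfolding hg_equiv_def sym_def by blast
    show "trans ?E" unfolding hg_equiv_def by (intro trans_Restr trans_rtrancl)
  qed
  have const: "ncompl N H = ncompl N H'" if "C \<in> ?HD // ?E" "H \<in> C" "H' \<in> C" for C H H'
  proof -
    have "(H, H') \<in> ?E" using quotient_eq_iff[OF eqv that(1) that(1) that(2,3)] by simp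
    then have "(H, H') \<in> ?R\<^sup>*" by (simp add: hg_equiv_def)
    then show ?thesis by (rule Rs)
  qed
  have part2: "card (ndls N) = (\<Sum>C \<in> ?HD // ?E. card C * ncompl N (rep C))"
    if rep: "\<forall>C \<in> ?HD // ?E. rep C \<in> C" for rep
  proof -
    have fin: "finite ?HD" by (rule finite_HD)
    have "(\<Sum>C \<in> ?HD // ?E. card C * ncompl N (rep C)) = (\<Sum>C \<in> ?HD // ?E. \<Sum>H\<in>C. ncompl N H)"
    proof (rule sum.cong)
      fix C assume C: "C \<in> ?HD // ?E"
      have rc: "rep C \<in> C" using rep C by blast
      have "\<And>H. H \<in> C \<Longrightarrow> ncompl N H = ncompl N (rep C)" using const[OF C _ rc] by blast
      then have "(\<Sum>H\<in>C. ncompl N H) = (\<Sum>H\<in>C. ncompl N (rep C))" by (rule sum.cong[OF refl])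
      then show "card C * ncompl N (rep C) = (\<Sum>H\<in>C. ncompl N H)" by simp
    qed simp
    also have "\<dots> = (\<Sum>H\<in>\<Union>(?HD // ?E). ncompl N H)"
    proof (rule sum.Union_disjoint[symmetric, simplified])
      show "\<forall>A\<in>?HD // ?E. finite A"
        using in_quotient_imp_subset[OF eqv] fin finite_subset by blast
      show "\<forall>A\<in>?HD // ?E. \<forall>B\<in>?HD // ?E. A \<noteq> B \<longrightarrow> A \<inter> B = {}"
        using quotient_disj[OF eqv] by blast
    qed
    also have "\<dots> = (\<Sum>H\<in>?HD. ncompl N H)" by (simp add: Union_quotient[OF eqv])
    also have "\<dots> = (\<Sum>H\<in>?HD. card {L \<in> ndls N. agrees H L})" by (simp add: ncompl_def)
    also have "\<dots> = card (\<Union>H\<in>?HD. {L \<in> ndls N. agrees H L})"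
    proof (rule card_UN_disjoint[symmetric])
      show "finite ?HD" by (rule fin)
      show "\<forall>H\<in>?HD. finite {L \<in> ndls N. agrees H L}" using finite_ndls by auto
      show "\<forall>H\<in>?HD. \<forall>H'\<in>?HD. H \<noteq> H' \<longrightarrow> {L \<in> ndls N. agrees H L} \<inter> {L \<in> ndls N. agrees H' L} = {}"
      proof (intro ballI impI)
        fix H H' assume H: "H \<in> ?HD" and H': "H' \<in> ?HD" and ne: "H \<noteq> H'"
        show "{L \<in> ndls N. agrees H L} \<inter> {L \<in> ndls N. agrees H' L} = {}"
        proof (rule ccontr)
          assume "{L \<in> ndls N. agrees H L} \<inter> {L \<in> ndls N. agrees H' L} \<noteq> {}"
          then obtain L where a1: "agrees H L" and a2: "agrees H' L" by blast
          have "H = restrH N L" using restrH_unique[OF _ a1] H by (simp add: hourglass_designs_def)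
          moreover have "H' = restrH N L" using restrH_unique[OF _ a2] H' by (simp add: hourglass_designs_def)
          ultimately have "H = H'" by simp
          then show False using ne by simp
        qed
      qed
    qed
    also have "(\<Union>H\<in>?HD. {L \<in> ndls N. agrees H L}) = ndls N"
    proof
      show "(\<Union>H\<in>?HD. {L \<in> ndls N. agrees H L}) \<subseteq> ndls N" by auto
      show "ndls N \<subseteq> (\<Union>H\<in>?HD. {L \<in> ndls N. agrees H L})"
      proof
        fix L assume L: "L \<in> ndls N"
        have "restrH N L \<in> ?HD" using restrH_hg[OF L assms] by (simp add: hourglass_designs_def)
        moreover have "agrees (restrH N L) L" by (auto simp: agrees_def restrH_def split: if_splits)
        ultimately show "L \<in> (\<Union>H\<in>?HD. {L \<in> ndls N. agrees H L})" using L by blast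
      qed
    qed
    finally show ?thesis by simp
  qed
  show ?thesis using const part2 by blast
qed

end
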